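(* Let $\mathbf{A}\in\mathbb{C}^{M\times N_a}$, $\mathbf{B}\in\mathbb{C}^{M\times N_b}$ have unit-$\ell_2$-norm columns with coherence parameters $\mu_a,\mu_b,\mu_m$. Let $\mathcal{E}\subseteq\{1,\dots,N_b\}$, $|\mathcal{E}|=n_e$, with $1-\mu_b(n_e-1)>0$, let $\mathbf{R}_{\mathcal{E}}=\mathbf{I}_M-\mathbf{B}_{\mathcal{E}}\mathbf{B}_{\mathcal{E}}^\dagger$ and let $\tilde{\mathbf{a}}_i=\mathbf{R}_{\mathcal{E}}\mathbf{a}_i$ be the columns of $\mathbf{R}_{\mathcal{E}}\mathbf{A}$. Then for all $i\ne j$ $$|\tilde{\mathbf{a}}_i^H\tilde{\mathbf{a}}_j|\le\mu_a+\frac{n_e\mu_m^2}{1-\mu_b(n_e-1)},$$ and for all $i$ $$\|\tilde{\mathbf{a}}_i\|_2^2\ge1-\frac{n_e\mu_m^2}{1-\mu_b(n_e-1)}.$$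
   Context: Coherence parameters: $\mu_a=\max_{k\ne\ell}|\mathbf{a}_k^H\mathbf{a}_\ell|$, $\mu_b=\max_{k\ne\ell}|\mathbf{b}_k^H\mathbf{b}_\ell|$, $\mu_m=\max_{k,\ell}|\mathbf{a}_k^H\mathbf{b}_\ell|$. $\mathbf{B}_{\mathcal{E}}$ is the column submatrix of $\mathbf{B}$ indexed by $\mathcal{E}$; $\mathbf{M}^\dagger=(\mathbf{M}^H\mathbf{M})^{-1}\mathbf{M}^H$. *)

theory Defs
  imports "Jordan_Normal_Form.Gauss_Jordan_Elimination" "Jordan_Normal_Form.Schur_Decomposition"
begin

definition hprod :: "complex vec \<Rightarrow> complex vec \<Rightarrow> complex" where
  "hprod a b = conjugate a \<bullet> b"

definition vnorm2 :: "complex vec \<Rightarrow> real" where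
  "vnorm2 v = (\<Sum>k<dim_vec v. (cmod (v $ k))^2)"

definition mu_self :: "complex mat \<Rightarrow> real" where
  "mu_self A = Max (insert 0 {cmod (hprod (col A k) (col A l)) | k l.
      k < dim_col A \<and> l < dim_col A \<and> k \<noteq> l})"

definition mu_mutual :: "complex mat \<Rightarrow> complex mat \<Rightarrow> real" where
  "mu_mutual A B = Max (insert 0 {cmod (hprod (col A k) (col B l)) | k l.
      k < dim_col A \<and> l < dim_col B})"

definition col_submat :: "complex mat \<Rightarrow> nat set \<Rightarrow> complex mat" where
  "col_submat B E = mat_of_cols (dim_row B) (map (col B) (sorted_list_of_set E))"

(* Moore-Penrose pseudoinverse for full column rank: (M^H M)^{-1} M^H *)
definition pinv :: "complex mat \<Rightarrow> complex mat" where
  "pinv M = the (mat_inverse (mat_adjoint M * M)) * mat_adjoint M"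

definition resid_proj :: "complex mat \<Rightarrow> nat set \<Rightarrow> complex mat" where
  "resid_proj B E = 1\<^sub>m (dim_row B) - col_submat B E * pinv (col_submat B E)"

end

theory Submission
  imports Defs
begin


lemma adj_carrier: "C \<in> carrier_mat m n \<Longrightarrow> mat_adjoint C \<in> carrier_mat n m"
  unfolding mat_adjoint_def by auto
lemma adj_index: "C \<in> carrier_mat m n \<Longrightarrow> i<n \<Longrightarrow> j<m \<Longrightarrow> mat_adjoint C $$ (i,j) = conjugate (C $$ (j,i))"
  unfolding mat_adjoint_def by (auto simp: mat_of_rows_index)
lemma adj_row: "C \<in> carrier_mat m n \<Longrightarrow> i<n \<Longrightarrow> row (mat_adjoint C) i = conjugate (col C i)"
  unfolding mat_adjoint_def by auto
lemma adj_swap: fixes C :: "complex mat" assumes C: "C \<in> carrier_mat m n" and x: "x \<in> carrier_vec n" and y: "y \<in> carrier_vec m"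
  shows "conjugate (C *\<^sub>v x) \<bullet> y = conjugate x \<bullet> (mat_adjoint C *\<^sub>v y)"
proof -
  have "conjugate (C *\<^sub>v x) \<bullet> y = (\<Sum>j<m. cnj (\<Sum>i<n. C $$ (j,i) * x $ i) * y $ j)"
    using C x y by (auto simp: scalar_prod_def mult_mat_vec_def row_def lessThan_atLeast0 intro!: sum.cong)
  also have "\<dots> = (\<Sum>j<m. \<Sum>i<n. cnj (C $$ (j,i)) * cnj (x $ i) * y $ j)"
    by (simp add: sum_distrib_right)
  also have "\<dots> = (\<Sum>i<n. \<Sum>j<m. cnj (C $$ (j,i)) * cnj (x $ i) * y $ j)"
    by (rule sum.swap)
  also have "\<dots> = (\<Sum>i<n. cnj (x $ i) * (\<Sum>j<m. cnj (C $$ (j,i)) * y $ j))"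
    by (simp add: sum_distrib_left mult_ac)
  also have "\<dots> = conjugate x \<bullet> (mat_adjoint C *\<^sub>v y)"
  proof -
    have Ca: "mat_adjoint C \<in> carrier_mat n m" using adj_carrier[OF C] .
    show ?thesis
    using C x y Ca by (auto simp: scalar_prod_def mult_mat_vec_def row_def lessThan_atLeast0 adj_index intro!: sum.cong)
  qed
  finally show ?thesis .
qed

lemma hprod_cnj: "u \<in> carrier_vec n \<Longrightarrow> v \<in> carrier_vec n \<Longrightarrow> cnj (hprod u v) = hprod v u"
  unfolding hprod_def using conjugate_conjugate_sprod conjugate_vec_sprod_comm
  by (metis conjugate_complex_def)

lemma hprod_cmod_sym: "u \<in> carrier_vec n \<Longrightarrow> v \<in> carrier_vec n \<Longrightarrow> cmod (hprod u v) = cmod (hprod v u)"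
  by (metis complex_mod_cnj hprod_cnj)

lemma hprod_expand: "hprod u v = (\<Sum>k<dim_vec v. cnj (u $ k) * v $ k)" if "dim_vec u = dim_vec v"
  using that unfolding hprod_def scalar_prod_def by (auto simp: lessThan_atLeast0)

lemma hprod_self: "hprod v v = complex_of_real (vnorm2 v)"
  unfolding hprod_expand[OF refl] vnorm2_def
  unfolding of_real_sum by (intro sum.cong refl) (metis complex_norm_square mult.commute)

lemma vnorm2_nonneg: "vnorm2 v \<ge> 0"
  unfolding vnorm2_def by (auto intro: sum_nonneg)

lemma vnorm2_zero: assumes "v \<in> carrier_vec n" "vnorm2 v = 0" shows "v = 0\<^sub>v n"
proof (rule eq_vecI)
  fix i assume "i < dim_vec (0\<^sub>v n)"
  hence i: "i < dim_vec v" using assms by auto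
  have "\<forall>k\<in>{..<dim_vec v}. (cmod (v $ k))^2 = 0"
    using assms(2) unfolding vnorm2_def by (subst sum_nonneg_eq_0_iff[symmetric]) auto
  thus "v $ i = 0\<^sub>v n $ i" using i assms by auto
qed (use assms in auto)

lemma real_CS: fixes a b :: "nat \<Rightarrow> real"
  shows "(\<Sum>k\<in>A. a k * b k)^2 \<le> (\<Sum>k\<in>A. (a k)^2) * (\<Sum>k\<in>A. (b k)^2)"
proof -
  have "0 \<le> (\<Sum>i\<in>A. \<Sum>j\<in>A. (a i * b j - a j * b i)^2)" by (intro sum_nonneg) auto
  also have "\<dots> = (\<Sum>i\<in>A. \<Sum>j\<in>A. (a i)^2 * (b j)^2 + (a j)^2 * (b i)^2 - 2 * ((a i * b i) * (a j * b j)))"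
    by (intro sum.cong refl) (simp add: power2_eq_square algebra_simps)
  also have "\<dots> = (\<Sum>i\<in>A. \<Sum>j\<in>A. (a i)^2 * (b j)^2) + (\<Sum>i\<in>A. \<Sum>j\<in>A. (a j)^2 * (b i)^2)
        - 2 * (\<Sum>i\<in>A. \<Sum>j\<in>A. (a i * b i) * (a j * b j))"
    by (simp add: sum_subtractf sum.distrib sum_distrib_left)
  also have "(\<Sum>i\<in>A. \<Sum>j\<in>A. (a j)^2 * (b i)^2) = (\<Sum>i\<in>A. \<Sum>j\<in>A. (a i)^2 * (b j)^2)"
    by (subst sum.swap) (rule refl)
  also have "(\<Sum>i\<in>A. \<Sum>j\<in>A. (a i)^2 * (b j)^2) = (\<Sum>k\<in>A. (a k)^2) * (\<Sum>k\<in>A. (b k)^2)"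
    by (rule sum_product[symmetric])
  also have "(\<Sum>i\<in>A. \<Sum>j\<in>A. (a i * b i) * (a j * b j)) = (\<Sum>k\<in>A. a k * b k)^2"
    by (simp only: power2_eq_square sum_product)
  finally show ?thesis by simp
qed

lemma complex_CS: assumes "u \<in> carrier_vec n" "v \<in> carrier_vec n"
  shows "(cmod (hprod u v))^2 \<le> vnorm2 u * vnorm2 v"
proof -
  have "cmod (hprod u v) \<le> (\<Sum>k<n. cmod (u $ k) * cmod (v $ k))"
  proof -
    have "hprod u v = (\<Sum>k<n. cnj (u $ k) * v $ k)" using assms hprod_expand[of u v] by auto
    also have "cmod \<dots> \<le> (\<Sum>k<n. cmod (cnj (u $ k) * v $ k))" by (rule norm_sum)
    finally show ?thesis by (simp add: norm_mult)
  qed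
  hence "(cmod (hprod u v))^2 \<le> (\<Sum>k<n. cmod (u $ k) * cmod (v $ k))^2"
    by (simp add: power_mono)
  also have "\<dots> \<le> vnorm2 u * vnorm2 v" unfolding vnorm2_def using assms real_CS by auto
  finally show ?thesis .
qed

lemma cnj_self1: "z * cnj z = (complex_of_real (cmod z))^2"
  by (metis complex_norm_square of_real_power)
lemma cnj_self2: "cnj z * z = (complex_of_real (cmod z))^2"
  by (metis cnj_self1 mult.commute)

lemma pair_sum: fixes f :: "nat \<Rightarrow> real"
  shows "(\<Sum>k<n. \<Sum>l\<in>{..<n}-{k}. f l) = (real n - 1) * (\<Sum>k<n. f k)"
proof -
  have "(\<Sum>k<n. \<Sum>l\<in>{..<n}-{k}. f l) = (\<Sum>k<n. (\<Sum>l<n. f l) - f k)"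
    by (intro sum.cong refl) (simp add: sum_diff1)
  also have "\<dots> = real n * (\<Sum>k<n. f k) - (\<Sum>k<n. f k)" by (simp add: sum_subtractf)
  finally show ?thesis by (simp add: algebra_simps)
qed

lemma quad_lower: fixes c :: "nat \<Rightarrow> nat \<Rightarrow> complex" and x :: "nat \<Rightarrow> complex"
  assumes diag: "\<forall>k<n. c k k = 1" and off: "\<forall>k<n. \<forall>l<n. k\<noteq>l \<longrightarrow> cmod (c k l) \<le> \<mu>" and mu: "\<mu> \<ge> 0"
  shows "Re (\<Sum>k<n. cnj (x k) * (\<Sum>l<n. c k l * x l)) \<ge> (1 - \<mu>*(real n - 1)) * (\<Sum>k<n. (cmod (x k))^2)"
proof -
  define a where "a k = cmod (x k)" for k
  have split: "cnj (x k) * (\<Sum>l<n. c k l * x l) = of_real ((a k)^2) + (\<Sum>l\<in>{..<n}-{k}. cnj (x k) * c k l * x l)"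
    if k: "k < n" for k
  proof -
    have "(\<Sum>l<n. c k l * x l) = c k k * x k + (\<Sum>l\<in>{..<n}-{k}. c k l * x l)"
      using k by (subst sum.remove[of _ k]) auto
    thus ?thesis using diag k unfolding a_def
      by (simp add: distrib_left sum_distrib_left cnj_self1 cnj_self2 mult.commute mult.left_commute)
  qed
  have bound: "Re (\<Sum>l\<in>{..<n}-{k}. cnj (x k) * c k l * x l) \<ge> - (\<Sum>l\<in>{..<n}-{k}. \<mu> * ((a k)^2 + (a l)^2) / 2)"
    if k: "k < n" for k
  proof -
    have "cmod (\<Sum>l\<in>{..<n}-{k}. cnj (x k) * c k l * x l) \<le> (\<Sum>l\<in>{..<n}-{k}. cmod (cnj (x k) * c k l * x l))"
      by (rule norm_sum)
    also have "\<dots> \<le> (\<Sum>l\<in>{..<n}-{k}. \<mu> * ((a k)^2 + (a l)^2) / 2)"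
    proof (rule sum_mono)
      fix l assume l: "l \<in> {..<n}-{k}"
      have c: "cmod (c k l) \<le> \<mu>" using off k l by auto
      have "cmod (cnj (x k) * c k l * x l) = a k * cmod (c k l) * a l" unfolding a_def by (simp add: norm_mult)
      also have "\<dots> \<le> a k * \<mu> * a l" using c unfolding a_def by (intro mult_right_mono mult_left_mono) auto
      also have "\<dots> \<le> \<mu> * ((a k)^2 + (a l)^2) / 2"
      proof -
        have "2 * (a k * a l) \<le> (a k)^2 + (a l)^2" using sum_squares_bound[of "a k" "a l"] by simp
        hence "\<mu> * (2 * (a k * a l)) \<le> \<mu> * ((a k)^2 + (a l)^2)" using mu by (rule mult_left_mono)
        thus ?thesis by (simp add: algebra_simps)
      qed
      finally show "cmod (cnj (x k) * c k l * x l) \<le> \<mu> * ((a k)^2 + (a l)^2) / 2" .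
    qed
    finally show ?thesis using abs_Re_le_cmod[of "\<Sum>l\<in>{..<n}-{k}. cnj (x k) * c k l * x l"] by linarith
  qed
  have "Re (\<Sum>k<n. cnj (x k) * (\<Sum>l<n. c k l * x l)) = (\<Sum>k<n. (a k)^2 + Re (\<Sum>l\<in>{..<n}-{k}. cnj (x k) * c k l * x l))"
    using split by (simp add: Re_sum)
  also have "\<dots> \<ge> (\<Sum>k<n. (a k)^2 - (\<Sum>l\<in>{..<n}-{k}. \<mu> * ((a k)^2 + (a l)^2) / 2))"
  proof (rule sum_mono)
    fix k assume "k \<in> {..<n}"
    thus "(a k)^2 - (\<Sum>l\<in>{..<n}-{k}. \<mu> * ((a k)^2 + (a l)^2) / 2) \<le> (a k)^2 + Re (\<Sum>l\<in>{..<n}-{k}. cnj (x k) * c k l * x l)"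
      using bound[of k] by simp
  qed
  moreover have "(\<Sum>k<n. (a k)^2 - (\<Sum>l\<in>{..<n}-{k}. \<mu> * ((a k)^2 + (a l)^2) / 2))
      = (1 - \<mu>*(real n - 1)) * (\<Sum>k<n. (a k)^2)"
  proof -
    have "(\<Sum>l\<in>{..<n}-{k}. \<mu> * ((a k)^2 + (a l)^2) / 2) = \<mu>/2 * ((real n - 1) * (a k)^2) + \<mu>/2 * (\<Sum>l\<in>{..<n}-{k}. (a l)^2)"
      if "k < n" for k
      using that by (simp add: sum.distrib sum_distrib_left[symmetric] add_divide_distrib distrib_left card_Diff_singleton of_nat_diff sum_divide_distrib[symmetric])
    hence "(\<Sum>k<n. (a k)^2 - (\<Sum>l\<in>{..<n}-{k}. \<mu> * ((a k)^2 + (a l)^2) / 2))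
      = (\<Sum>k<n. (a k)^2 - (\<mu>/2 * ((real n - 1) * (a k)^2) + \<mu>/2 * (\<Sum>l\<in>{..<n}-{k}. (a l)^2)))"
      by (intro sum.cong refl) simp
    also have "\<dots> = (\<Sum>k<n. (a k)^2) - \<mu>/2 * (real n - 1) * (\<Sum>k<n. (a k)^2) - \<mu>/2 * (\<Sum>k<n. \<Sum>l\<in>{..<n}-{k}. (a l)^2)"
      by (simp only: sum_subtractf sum.distrib sum_distrib_left[symmetric] mult.assoc[symmetric])
    also have "\<dots> = (1 - \<mu>*(real n - 1)) * (\<Sum>k<n. (a k)^2)" unfolding pair_sum by (simp add: field_simps)
    finally show ?thesis .
  qed
  ultimately show ?thesis unfolding a_def by simp
qed

lemma gram_inv:
  fixes Be :: "complex mat"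
  assumes Be: "Be \<in> carrier_mat m n" and lam: "lm > 0"
    and Q: "\<And>x. x \<in> carrier_vec n \<Longrightarrow> Re (hprod x ((mat_adjoint Be * Be) *\<^sub>v x)) \<ge> lm * vnorm2 x"
  shows "the (mat_inverse (mat_adjoint Be * Be)) \<in> carrier_mat n n \<and>
         (mat_adjoint Be * Be) * the (mat_inverse (mat_adjoint Be * Be)) = 1\<^sub>m n"
proof -
  let ?G = "mat_adjoint Be * Be"
  have G: "?G \<in> carrier_mat n n" using adj_carrier[OF Be] Be by auto
  have det: "det ?G \<noteq> 0"
  proof
    assume "det ?G = 0"
    then obtain v where v: "v \<in> carrier_vec n" "v \<noteq> 0\<^sub>v n" "?G *\<^sub>v v = 0\<^sub>v n"
      using det_0_iff_vec_prod_zero_field[OF G] by auto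
    have "hprod v (0\<^sub>v n) = 0" using v unfolding hprod_def by simp
    hence "lm * vnorm2 v \<le> 0" using Q[OF v(1)] v(3) by simp
    hence "vnorm2 v = 0" using lam vnorm2_nonneg[of v] by (simp add: mult_le_0_iff)
    thus False using vnorm2_zero[OF v(1)] v(2) by simp
  qed
  show ?thesis
  proof (cases "mat_inverse ?G")
    case None
    from mat_inverse(1)[OF G None, of "()"] det_non_zero_imp_unit[OF G det, of "()"] show ?thesis by simp
  next
    case (Some Gi)
    from mat_inverse(2)[OF G Some] show ?thesis using Some by simp
  qed
qed

lemma adj_swap2: fixes C :: "complex mat" assumes C: "C \<in> carrier_mat m n" and x: "x \<in> carrier_vec n" and y: "y \<in> carrier_vec m"
  shows "conjugate y \<bullet> (C *\<^sub>v x) = conjugate (mat_adjoint C *\<^sub>v y) \<bullet> x"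
proof -
  have Ca: "mat_adjoint C \<in> carrier_mat n m" using adj_carrier[OF C] .
  have "conjugate y \<bullet> (C *\<^sub>v x) = cnj (hprod (C *\<^sub>v x) y)"
    using hprod_cnj[of "C *\<^sub>v x" m y] C x y unfolding hprod_def by auto
  also have "hprod (C *\<^sub>v x) y = hprod x (mat_adjoint C *\<^sub>v y)" unfolding hprod_def using adj_swap[OF C x y] .
  also have "cnj \<dots> = hprod (mat_adjoint C *\<^sub>v y) x" using hprod_cnj[of x n "mat_adjoint C *\<^sub>v y"] Ca x y by auto
  finally show ?thesis unfolding hprod_def .
qed

lemma conj_minus_vec: fixes u v :: "complex vec" assumes "u \<in> carrier_vec m" "v \<in> carrier_vec m"
  shows "conjugate (u - v) = conjugate u - conjugate v"
  using assms by (intro eq_vecI) auto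

lemma hprod_resid:
  fixes Be Gi :: "complex mat"
  assumes Be: "Be \<in> carrier_mat m n" and Gi: "Gi \<in> carrier_mat n n"
    and inv: "(mat_adjoint Be * Be) * Gi = 1\<^sub>m n"
    and a: "a \<in> carrier_vec m" and a': "a' \<in> carrier_vec m"
  shows "hprod (a - Be *\<^sub>v (Gi *\<^sub>v (mat_adjoint Be *\<^sub>v a))) (a' - Be *\<^sub>v (Gi *\<^sub>v (mat_adjoint Be *\<^sub>v a')))
       = hprod a a' - hprod (mat_adjoint Be *\<^sub>v a) (Gi *\<^sub>v (mat_adjoint Be *\<^sub>v a'))"
proof -
  have Ba: "mat_adjoint Be \<in> carrier_mat n m" using adj_carrier[OF Be] .
  define w where "w = mat_adjoint Be *\<^sub>v a"
  define w' where "w' = mat_adjoint Be *\<^sub>v a'"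
  define x where "x = Gi *\<^sub>v w"
  define x' where "x' = Gi *\<^sub>v w'"
  have w: "w \<in> carrier_vec n" "w' \<in> carrier_vec n" using Ba a a' unfolding w_def w'_def by auto
  have x: "x \<in> carrier_vec n" "x' \<in> carrier_vec n" using Gi w unfolding x_def x'_def by auto
  have p: "Be *\<^sub>v x \<in> carrier_vec m" "Be *\<^sub>v x' \<in> carrier_vec m" using Be x by auto
  have Gx: "(mat_adjoint Be * Be) *\<^sub>v x' = w'"
  proof -
    have "(mat_adjoint Be * Be) *\<^sub>v x' = ((mat_adjoint Be * Be) * Gi) *\<^sub>v w'"
      unfolding x'_def using Ba Be Gi w by (subst assoc_mult_mat_vec[of _ n n _ n]) auto
    thus ?thesis using inv w by simp
  qed
  have e1: "conjugate a \<bullet> (Be *\<^sub>v x') = conjugate w \<bullet> x'" unfolding w_def by (rule adj_swap2[OF Be x(2) a])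
  have e2: "conjugate (Be *\<^sub>v x) \<bullet> a' = conjugate x \<bullet> w'" unfolding w'_def by (rule adj_swap[OF Be x(1) a'])
  have e3: "conjugate (Be *\<^sub>v x) \<bullet> (Be *\<^sub>v x') = conjugate x \<bullet> w'"
  proof -
    have "conjugate (Be *\<^sub>v x) \<bullet> (Be *\<^sub>v x') = conjugate x \<bullet> (mat_adjoint Be *\<^sub>v (Be *\<^sub>v x'))"
      by (rule adj_swap[OF Be x(1) p(2)])
    also have "mat_adjoint Be *\<^sub>v (Be *\<^sub>v x') = (mat_adjoint Be * Be) *\<^sub>v x'"
      using Ba Be x by (subst assoc_mult_mat_vec[of _ n m _ n]) auto
    finally show ?thesis using Gx by simp
  qed
  have ca: "conjugate a \<in> carrier_vec m" "conjugate (Be *\<^sub>v x) \<in> carrier_vec m" using a p by auto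
  have "hprod (a - Be *\<^sub>v x) (a' - Be *\<^sub>v x') =
     (conjugate a - conjugate (Be *\<^sub>v x)) \<bullet> (a' - Be *\<^sub>v x')"
    unfolding hprod_def using conj_minus_vec[OF a p(1)] by simp
  also have "\<dots> = conjugate a \<bullet> a' - conjugate a \<bullet> (Be *\<^sub>v x') - (conjugate (Be *\<^sub>v x) \<bullet> a' - conjugate (Be *\<^sub>v x) \<bullet> (Be *\<^sub>v x'))"
    using ca a' p by (simp add: minus_scalar_prod_distrib[of _ m] scalar_prod_minus_distrib[of _ m])
  also have "\<dots> = hprod a a' - hprod w x'" unfolding e1 e2 e3 hprod_def by simp
  finally show ?thesis unfolding x_def x'_def w_def w'_def .
qed

lemma real_bounds: fixes lm X W Q c :: real
  assumes lm: "lm > 0" and X: "X \<ge> 0" and W: "W \<ge> 0" and Qx: "Q \<ge> lm * X" and Qc: "Q \<le> c" and c: "c^2 \<le> X * W"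
  shows "Q \<le> W / lm \<and> X \<le> W / lm^2"
proof -
  have Q0: "Q \<ge> 0" using lm X Qx by (meson mult_nonneg_nonneg less_imp_le order_trans)
  have "Q^2 \<le> c^2" using Q0 Qc by (simp add: power_mono)
  hence QQ: "Q * Q \<le> X * W" using c by (simp add: power2_eq_square)
  show ?thesis
  proof (cases "X = 0")
    case True
    hence "Q * Q \<le> 0" using QQ by simp
    hence "Q = 0" using Q0 by (simp add: mult_le_0_iff) 
    thus ?thesis using True lm W by simp
  next
    case False
    hence Xp: "X > 0" using X by simp
    have "lm * X * Q \<le> Q * Q" using Qx Q0 by (simp add: mult_right_mono)
    hence "lm * X * Q \<le> X * W" using QQ by simp
    hence "lm * Q \<le> W" using Xp by (simp add: mult.assoc)
    hence q: "Q \<le> W / lm" using lm by (simp add: field_simps)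
    have "lm * X \<le> W / lm" using Qx q by simp
    hence "X \<le> W / lm^2" using lm by (simp add: field_simps power2_eq_square)
    thus ?thesis using q by simp
  qed
qed

lemma proj_bounds:
  fixes Be Gi :: "complex mat"
  assumes Be: "Be \<in> carrier_mat m n" and Gi: "Gi \<in> carrier_mat n n" and lm: "lm > 0"
    and Q: "\<And>x. x \<in> carrier_vec n \<Longrightarrow> Re (hprod x ((mat_adjoint Be * Be) *\<^sub>v x)) \<ge> lm * vnorm2 x"
    and inv: "(mat_adjoint Be * Be) * Gi = 1\<^sub>m n"
    and w: "w \<in> carrier_vec n"
  shows "Re (hprod w (Gi *\<^sub>v w)) \<le> vnorm2 w / lm \<and> vnorm2 (Gi *\<^sub>v w) \<le> vnorm2 w / lm^2"
proof -
  have Ba: "mat_adjoint Be \<in> carrier_mat n m" using adj_carrier[OF Be] .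
  define x where "x = Gi *\<^sub>v w"
  have x: "x \<in> carrier_vec n" using Gi w unfolding x_def by auto
  have Gx: "(mat_adjoint Be * Be) *\<^sub>v x = w"
  proof -
    have "(mat_adjoint Be * Be) *\<^sub>v x = ((mat_adjoint Be * Be) * Gi) *\<^sub>v w"
      unfolding x_def using Ba Be Gi w by (subst assoc_mult_mat_vec[of _ n n _ n]) auto
    thus ?thesis using inv w by simp
  qed
  have Qx: "Re (hprod w x) \<ge> lm * vnorm2 x"
  proof -
    have "Re (hprod w x) = Re (cnj (hprod x w))" using hprod_cnj[OF x w] by simp
    also have "\<dots> = Re (hprod x w)" by simp
    finally show ?thesis using Q[OF x] Gx by simp
  qed
  have "Re (hprod w x) \<le> cmod (hprod w x)" by (rule complex_Re_le_cmod)
  from real_bounds[OF lm vnorm2_nonneg vnorm2_nonneg Qx this] complex_CS[OF w x]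
  show ?thesis unfolding x_def by (simp add: mult.commute)
qed

lemma fin_pairs: fixes a b :: nat shows "finite {f k l | k l. k < a \<and> l < b \<and> P k l}"
proof -
  have "{f k l | k l. k < a \<and> l < b \<and> P k l} \<subseteq> (\<lambda>(k,l). f k l) ` ({..<a} \<times> {..<b})" by auto
  thus ?thesis by (rule finite_subset) (intro finite_imageI finite_cartesian_product; simp)
qed

lemma mu_self_ge: "k < dim_col A \<Longrightarrow> l < dim_col A \<Longrightarrow> k \<noteq> l \<Longrightarrow> cmod (hprod (col A k) (col A l)) \<le> mu_self A"
  unfolding mu_self_def
  by (rule Max_ge) (use fin_pairs[of "\<lambda>k l. cmod (hprod (col A k) (col A l))" "dim_col A" "dim_col A" "\<lambda>k l. k \<noteq> l"] in auto)

lemma mu_self_nonneg: "mu_self A \<ge> 0"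
  unfolding mu_self_def
  by (rule Max_ge) (use fin_pairs[of "\<lambda>k l. cmod (hprod (col A k) (col A l))" "dim_col A" "dim_col A" "\<lambda>k l. k \<noteq> l"] in auto)

lemma mu_mutual_ge: "k < dim_col A \<Longrightarrow> l < dim_col B \<Longrightarrow> cmod (hprod (col A k) (col B l)) \<le> mu_mutual A B"
  unfolding mu_mutual_def
  by (rule Max_ge) (use fin_pairs[of "\<lambda>k l. cmod (hprod (col A k) (col B l))" "dim_col A" "dim_col B" "\<lambda>k l. True"] in auto)

lemma mu_mutual_nonneg: "mu_mutual A B \<ge> 0"
  unfolding mu_mutual_def
  by (rule Max_ge) (use fin_pairs[of "\<lambda>k l. cmod (hprod (col A k) (col B l))" "dim_col A" "dim_col B" "\<lambda>k l. True"] in auto)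

theorem mainTheorem9:
  fixes A B :: "complex mat" and M Na Nb :: nat and E :: "nat set"
  assumes "A \<in> carrier_mat M Na" and "B \<in> carrier_mat M Nb"
    and "\<forall>k<Na. vnorm2 (col A k) = 1"
    and "\<forall>l<Nb. vnorm2 (col B l) = 1"
    and "E \<subseteq> {0..<Nb}"
    and "1 - mu_self B * (real (card E) - 1) > 0"
  shows "(\<forall>i<Na. \<forall>j<Na. i \<noteq> j \<longrightarrow>
           cmod (hprod (resid_proj B E *\<^sub>v col A i) (resid_proj B E *\<^sub>v col A j))
             \<le> mu_self A + real (card E) * (mu_mutual A B)^2 / (1 - mu_self B * (real (card E) - 1))) \<and>
         (\<forall>i<Na. vnorm2 (resid_proj B E *\<^sub>v col A i)
             \<ge> 1 - real (card E) * (mu_mutual A B)^2 / (1 - mu_self B * (real (card E) - 1)))"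
proof -
  note Ac = assms(1) and Bc = assms(2) and Anorm = assms(3) and Bnorm = assms(4) and Esub = assms(5)
  define n where "n = card E"
  define lm where "lm = 1 - mu_self B * (real n - 1)"
  define mm where "mm = mu_mutual A B"
  have lm: "lm > 0" using assms(6) unfolding lm_def n_def by simp
  have finE: "finite E" using Esub finite_subset by blast
  define s where "s = sorted_list_of_set E"
  have slen: "length s = n" unfolding s_def n_def using finE by simp
  have sdist: "distinct s" unfolding s_def by simp
  have sset: "set s = E" unfolding s_def using finE by simp
  have sNb: "s ! k < Nb" if "k < n" for k
  proof -
    have "s ! k \<in> E" using nth_mem[of k s] that slen sset by auto
    thus ?thesis using Esub by auto
  qed
  define Be where "Be = col_submat B E"
  have Be: "Be \<in> carrier_mat M n" unfolding Be_def col_submat_def s_def[symmetric] using Bc slen by auto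
  have colBe: "col Be k = col B (s ! k)" if "k < n" for k
    unfolding Be_def col_submat_def s_def[symmetric] using Bc slen that
    by (subst col_mat_of_cols) auto
  have Ba: "mat_adjoint Be \<in> carrier_mat n M" using adj_carrier[OF Be] .
  define G where "G = mat_adjoint Be * Be"
  have G: "G \<in> carrier_mat n n" unfolding G_def using Ba Be by auto
  have Gkl: "G $$ (k,l) = hprod (col B (s!k)) (col B (s!l))" if "k < n" "l < n" for k l
    unfolding G_def hprod_def using that Ba Be adj_row[OF Be, of k] colBe by simp
  have Q: "Re (hprod x (G *\<^sub>v x)) \<ge> lm * vnorm2 x" if x: "x \<in> carrier_vec n" for x
  proof -
    have "hprod x (G *\<^sub>v x) = (\<Sum>k<n. cnj (x $ k) * (\<Sum>l<n. G $$ (k,l) * x $ l))"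
      using x G by (auto simp: hprod_def scalar_prod_def mult_mat_vec_def row_def lessThan_atLeast0 intro!: sum.cong)
    moreover have "vnorm2 x = (\<Sum>k<n. (cmod (x $ k))^2)" using x unfolding vnorm2_def by simp
    moreover have "Re (\<Sum>k<n. cnj (x $ k) * (\<Sum>l<n. G $$ (k,l) * x $ l)) \<ge> lm * (\<Sum>k<n. (cmod (x $ k))^2)"
      unfolding lm_def
    proof (rule quad_lower)
      show "\<forall>k<n. G $$ (k, k) = 1" using Gkl hprod_self Bnorm sNb by simp
      show "\<forall>k<n. \<forall>l<n. k \<noteq> l \<longrightarrow> cmod (G $$ (k, l)) \<le> mu_self B"
      proof (intro allI impI)
        fix k l assume kl: "k < n" "l < n" "k \<noteq> l"
        have "s ! k \<noteq> s ! l" using nth_eq_iff_index_eq[OF sdist, of k l] kl slen by simp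
        thus "cmod (G $$ (k, l)) \<le> mu_self B" using Gkl kl sNb mu_self_ge[of "s!k" B "s!l"] Bc by auto
      qed
      show "mu_self B \<ge> 0" by (rule mu_self_nonneg)
    qed
    ultimately show ?thesis by simp
  qed
  from gram_inv[OF Be lm Q[unfolded G_def]]
  obtain Gi where Gi: "Gi \<in> carrier_mat n n" and inv: "mat_adjoint Be * Be * Gi = 1\<^sub>m n"
    and pinv: "pinv Be = Gi * mat_adjoint Be"
    unfolding pinv_def by blast
  have Rapp: "resid_proj B E *\<^sub>v a = a - Be *\<^sub>v (Gi *\<^sub>v (mat_adjoint Be *\<^sub>v a))" if a: "a \<in> carrier_vec M" for a
  proof -
    have "resid_proj B E = 1\<^sub>m M - Be * (Gi * mat_adjoint Be)"
      unfolding resid_proj_def Be_def[symmetric] pinv using Bc by simp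
    moreover have "(1\<^sub>m M - Be * (Gi * mat_adjoint Be)) *\<^sub>v a = a - Be *\<^sub>v (Gi *\<^sub>v (mat_adjoint Be *\<^sub>v a))"
      using Be Gi Ba a
      by (subst minus_mult_distrib_mat_vec[of _ M M]) (auto simp: assoc_mult_mat_vec[of _ M n _ M])
    ultimately show ?thesis by simp
  qed
  have ca: "col A i \<in> carrier_vec M" for i using Ac by auto
  define w where "w i = mat_adjoint Be *\<^sub>v col A i" for i
  have wc: "w i \<in> carrier_vec n" for i unfolding w_def using Ba ca by auto
  have wnorm: "vnorm2 (w i) \<le> real n * mm^2" if i: "i < Na" for i
  proof -
    have "vnorm2 (w i) = (\<Sum>k<n. (cmod (w i $ k))^2)" using wc[of i] unfolding vnorm2_def by simp
    also have "\<dots> \<le> (\<Sum>k<n. mm^2)"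
    proof (rule sum_mono)
      fix k assume k: "k \<in> {..<n}"
      have "w i $ k = hprod (col B (s!k)) (col A i)"
        unfolding w_def hprod_def using k Ba adj_row[OF Be, of k] colBe[of k] by simp
      also have "cmod \<dots> = cmod (hprod (col A i) (col B (s!k)))"
        using hprod_cmod_sym[of "col B (s!k)" M "col A i"] Bc ca by auto
      finally have "cmod (w i $ k) \<le> mm" unfolding mm_def using mu_mutual_ge[of i A "s!k" B] Ac Bc i sNb k by auto
      thus "(cmod (w i $ k))^2 \<le> mm^2" by (simp add: power_mono)
    qed
    finally show ?thesis by simp
  qed
  have hR: "hprod (resid_proj B E *\<^sub>v col A i) (resid_proj B E *\<^sub>v col A j) = hprod (col A i) (col A j) - hprod (w i) (Gi *\<^sub>v w j)" for i j
    unfolding Rapp[OF ca] w_def by (rule hprod_resid[OF Be Gi inv ca ca])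
  have pb: "Re (hprod (w i) (Gi *\<^sub>v w i)) \<le> vnorm2 (w i) / lm \<and> vnorm2 (Gi *\<^sub>v w j) \<le> vnorm2 (w j) / lm^2" for i j
    using proj_bounds[OF Be Gi lm Q[unfolded G_def] inv wc] by blast
  have part1: "cmod (hprod (resid_proj B E *\<^sub>v col A i) (resid_proj B E *\<^sub>v col A j)) \<le> mu_self A + real n * mm^2 / lm"
    if ij: "i < Na" "j < Na" "i \<noteq> j" for i j
  proof -
    have c1: "cmod (hprod (col A i) (col A j)) \<le> mu_self A" using mu_self_ge[of i A j] Ac ij by auto
    have "(cmod (hprod (w i) (Gi *\<^sub>v w j)))^2 \<le> vnorm2 (w i) * vnorm2 (Gi *\<^sub>v w j)"
      using complex_CS[OF wc, of "Gi *\<^sub>v w j"] Gi wc by auto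
    also have "\<dots> \<le> (real n * mm^2) * ((real n * mm^2) / lm^2)"
    proof (rule mult_mono)
      show "vnorm2 (Gi *\<^sub>v w j) \<le> real n * mm\<^sup>2 / lm\<^sup>2"
      proof -
        have "vnorm2 (w j) / lm^2 \<le> real n * mm\<^sup>2 / lm\<^sup>2" by (rule divide_right_mono[OF wnorm[OF ij(2)]]) simp
        thus ?thesis using pb[of j j] by linarith
      qed
    qed (use wnorm[OF ij(1)] vnorm2_nonneg in auto)
    also have "\<dots> = (real n * mm^2 / lm)^2" by (simp add: power2_eq_square)
    finally have sq: "(cmod (hprod (w i) (Gi *\<^sub>v w j)))^2 \<le> (real n * mm^2 / lm)^2" .
    have nn: "0 \<le> real n * mm^2 / lm" using lm by simp
    have "cmod (hprod (w i) (Gi *\<^sub>v w j)) \<le> real n * mm^2 / lm"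
      by (rule power2_le_imp_le[OF sq nn])
    moreover have "cmod (hprod (col A i) (col A j) - hprod (w i) (Gi *\<^sub>v w j)) \<le>
        cmod (hprod (col A i) (col A j)) + cmod (hprod (w i) (Gi *\<^sub>v w j))" by (rule norm_triangle_ineq4)
    ultimately show ?thesis unfolding hR using c1 by linarith
  qed
  have part2: "vnorm2 (resid_proj B E *\<^sub>v col A i) \<ge> 1 - real n * mm^2 / lm" if i: "i < Na" for i
  proof -
    have "complex_of_real (vnorm2 (resid_proj B E *\<^sub>v col A i)) = complex_of_real (vnorm2 (col A i)) - hprod (w i) (Gi *\<^sub>v w i)"
      using hR[of i i] unfolding hprod_self .
    hence "Re (complex_of_real (vnorm2 (resid_proj B E *\<^sub>v col A i))) = Re (complex_of_real (vnorm2 (col A i)) - hprod (w i) (Gi *\<^sub>v w i))"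
      by (rule arg_cong)
    hence "vnorm2 (resid_proj B E *\<^sub>v col A i) = vnorm2 (col A i) - Re (hprod (w i) (Gi *\<^sub>v w i))"
      by simp
    moreover have "Re (hprod (w i) (Gi *\<^sub>v w i)) \<le> real n * mm^2 / lm"
    proof -
      have "vnorm2 (w i) / lm \<le> real n * mm\<^sup>2 / lm" by (rule divide_right_mono[OF wnorm[OF i]]) (use lm in simp)
      thus ?thesis using pb[of i i] by linarith
    qed
    ultimately show ?thesis using Anorm i by simp
  qed
  show ?thesis using part1 part2 unfolding lm_def mm_def n_def by blast
qed
end
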